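(* Let $(G_n)_{n\in\mathbb{N}}$ be a sequence of groups equipped with a diverse $d$-ary cloning system. Then the normalizer of $F_d$ in $\mathscr{T}_d(G_* )$ equals $F_d$, i.e. $\{x\in\mathscr{T}_d(G_* ): x^{-1}F_dx=F_d\}=F_d$.
   Context: Fix an integer $d\ge 2$. A $d$-ary tree is a finite rooted tree in which each non-leaf vertex has exactly $d$ ordered children; leaves are numbered $1,\dots,n$ left to right. For $1\le k\le n$, $T_k$ is $T$ with a $d$-ary caret attached to its $k$-th leaf. Standard cloning maps: for $\sigma\in S_n$, $1\le k\le n$, partition $\{1,\dots,n+d-1\}$ into consecutive blocks $B^{(k)}_j=\{j\}$ ($j<k$), $B^{(k)}_k=\{k,\dots,k+d-1\}$, $B^{(k)}_j=\{j+d-1\}$ ($j>k$); $(\sigma)\varsigma_k^n$ maps $B^{(k)}_j$ onto $B^{(\sigma(k))}_{\sigma(j)}$ order-preservingly. A $d$-ary cloning system: groups $(G_n)$, homomorphisms $\rho_n:G_n\to S_n$, injective functions $\kappa_k^n:G_n\to G_{n+d-1}$ written on the right with $(g)(\kappa\circ\kappa'):=((g)\kappa)\kappa'$, such that for $1\le k<\ell\le n$, $g,h\in G_n$: (C1) $(gh)\kappa_k^n=(g)\kappa^n_{\rho_n(h)k}(h)\kappa_k^n$; (C2) $\kappa_\ell^n\circ\kappa_k^{n+d-1}=\kappa_k^n\circ\kappa_{\ell+d-1}^{n+d-1}$; (C3) $\rho_{n+d-1}((g)\kappa_k^n)(i)=((\rho_n(g))\varsigma_k^n)(i)$ for $i\notin\{k,\dots,k+d-1\}$.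 $\mathscr{T}_d(G_* )$: classes $[T,g,U]$ ($T,U$ with $n$ leaves, $g\in G_n$) under the equivalence generated by $(T,g,U)\sim(T_{\rho_n(g)(k)},(g)\kappa_k^n,U_k)$, product $[T,g,U][U,h,W]=[T,gh,W]$. The elements $[T,1,U]$ form the subgroup $F_d$. Diverse: some $n_0$ has $\bigcap_{k=1}^n\mathrm{Im}\,\kappa_k^n=\{1\}$ for all $n\ge n_0$. *)

theory Defs
  imports "HOL-Algebra.Sym_Groups"
begin

datatype tree = Lf | Nd "tree list"

fun dary :: "nat \<Rightarrow> tree \<Rightarrow> bool" where
  "dary d Lf = True"
| "dary d (Nd ts) = (length ts = d \<and> (\<forall>t\<in>set ts. dary d t))"

fun nleaves :: "tree \<Rightarrow> nat" where
  "nleaves Lf = 1"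
| "nleaves (Nd ts) = sum_list (map nleaves ts)"

text \<open>caret d k T = T_k : attach a d-ary caret to the k-th leaf (leaves numbered from 1).\<close>
fun caret :: "nat \<Rightarrow> nat \<Rightarrow> tree \<Rightarrow> tree"
and caretl :: "nat \<Rightarrow> nat \<Rightarrow> tree list \<Rightarrow> tree list" where
  "caret d k Lf = (if k = 1 then Nd (replicate d Lf) else Lf)"
| "caret d k (Nd ts) = Nd (caretl d k ts)"
| "caretl d k [] = []"
| "caretl d k (t # ts) =
     (if k \<le> nleaves t then caret d k t # ts else t # caretl d (k - nleaves t) ts)"

text \<open>Smallest element of the block B^(k)_m of the partition of {1..n+d-1}.\<close>
definition blk_start :: "nat \<Rightarrow> nat \<Rightarrow> nat \<Rightarrow> nat" where
  "blk_start d k m = (if m < k then m else if m = k then k else m + d - 1)"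

definition clone_perm :: "nat \<Rightarrow> nat \<Rightarrow> nat \<Rightarrow> (nat \<Rightarrow> nat) \<Rightarrow> nat \<Rightarrow> nat" where
  "clone_perm d n k \<sigma> i =
     (if 1 \<le> i \<and> i \<le> n + d - 1 then
        (if i < k then blk_start d (\<sigma> k) (\<sigma> i)
         else if i \<le> k + d - 1 then blk_start d (\<sigma> k) (\<sigma> k) + (i - k)
         else blk_start d (\<sigma> k) (\<sigma> (i - (d - 1))))
      else i)"

definition cloning_system ::
  "nat \<Rightarrow> (nat \<Rightarrow> 'g monoid) \<Rightarrow> (nat \<Rightarrow> 'g \<Rightarrow> nat \<Rightarrow> nat) \<Rightarrow> (nat \<Rightarrow> nat \<Rightarrow> 'g \<Rightarrow> 'g) \<Rightarrow> bool"
where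
  "cloning_system d G \<rho> \<kappa> \<longleftrightarrow>
     (\<forall>n\<ge>1. group (G n)) \<and>
     (\<forall>n\<ge>1. \<rho> n \<in> hom (G n) (sym_group n)) \<and>
     (\<forall>n\<ge>1. \<forall>k\<in>{1..n}. \<kappa> n k ` carrier (G n) \<subseteq> carrier (G (n + d - 1))
                        \<and> inj_on (\<kappa> n k) (carrier (G n))) \<and>
     \<comment> \<open>(C1)\<close>
     (\<forall>n\<ge>1. \<forall>k\<in>{1..n}. \<forall>g\<in>carrier (G n). \<forall>h\<in>carrier (G n).
        \<kappa> n k (g \<otimes>\<^bsub>G n\<^esub> h) = \<kappa> n (\<rho> n h k) g \<otimes>\<^bsub>G (n + d - 1)\<^esub> \<kappa> n k h) \<and>
     \<comment> \<open>(C2)\<close>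
     (\<forall>n\<ge>1. \<forall>k l. 1 \<le> k \<and> k < l \<and> l \<le> n \<longrightarrow> (\<forall>g\<in>carrier (G n).
        \<kappa> (n + d - 1) k (\<kappa> n l g) = \<kappa> (n + d - 1) (l + d - 1) (\<kappa> n k g))) \<and>
     \<comment> \<open>(C3)\<close>
     (\<forall>n\<ge>1. \<forall>k\<in>{1..n}. \<forall>g\<in>carrier (G n). \<forall>i\<in>{1..n + d - 1}. i \<notin> {k..k + d - 1} \<longrightarrow>
        \<rho> (n + d - 1) (\<kappa> n k g) i = clone_perm d n k (\<rho> n g) i)"

definition diverse :: "nat \<Rightarrow> (nat \<Rightarrow> 'g monoid) \<Rightarrow> (nat \<Rightarrow> nat \<Rightarrow> 'g \<Rightarrow> 'g) \<Rightarrow> bool" where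
  "diverse d G \<kappa> \<longleftrightarrow>
     (\<exists>n0. \<forall>n\<ge>n0. n \<ge> 1 \<longrightarrow>
        (\<Inter>k\<in>{1..n}. \<kappa> n k ` carrier (G n)) = {\<one>\<^bsub>G (n + d - 1)\<^esub>})"

type_synonym 'g triple = "tree \<times> 'g \<times> tree"

definition triples :: "nat \<Rightarrow> (nat \<Rightarrow> 'g monoid) \<Rightarrow> 'g triple set" where
  "triples d G = {(T, g, U). dary d T \<and> dary d U \<and> nleaves T = nleaves U
                            \<and> g \<in> carrier (G (nleaves T))}"

definition expansion ::
  "nat \<Rightarrow> (nat \<Rightarrow> 'g monoid) \<Rightarrow> (nat \<Rightarrow> 'g \<Rightarrow> nat \<Rightarrow> nat) \<Rightarrow> (nat \<Rightarrow> nat \<Rightarrow> 'g \<Rightarrow> 'g)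
   \<Rightarrow> ('g triple \<times> 'g triple) set" where
  "expansion d G \<rho> \<kappa> = {((T, g, U), (caret d (\<rho> (nleaves T) g k) T, \<kappa> (nleaves T) k g, caret d k U))
       | T g U k. (T, g, U) \<in> triples d G \<and> 1 \<le> k \<and> k \<le> nleaves T}"

definition triple_equiv ::
  "nat \<Rightarrow> (nat \<Rightarrow> 'g monoid) \<Rightarrow> (nat \<Rightarrow> 'g \<Rightarrow> nat \<Rightarrow> nat) \<Rightarrow> (nat \<Rightarrow> nat \<Rightarrow> 'g \<Rightarrow> 'g)
   \<Rightarrow> ('g triple \<times> 'g triple) set" where
  "triple_equiv d G \<rho> \<kappa> =
     (expansion d G \<rho> \<kappa> \<union> (expansion d G \<rho> \<kappa>)\<inverse>)\<^sup>* \<inter> (triples d G \<times> triples d G)"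

definition tclass where
  "tclass d G \<rho> \<kappa> x = triple_equiv d G \<rho> \<kappa> `` {x}"

definition Td_carrier where
  "Td_carrier d G \<rho> \<kappa> = tclass d G \<rho> \<kappa> ` triples d G"

definition Td_mult where
  "Td_mult d G \<rho> \<kappa> X Y =
     \<Union>{tclass d G \<rho> \<kappa> (T, g \<otimes>\<^bsub>G (nleaves T)\<^esub> h, W) | T g U h W.
          (T, g, U) \<in> X \<and> (U, h, W) \<in> Y}"

definition Td_inv where
  "Td_inv d G \<rho> \<kappa> X =
     \<Union>{tclass d G \<rho> \<kappa> (U, inv\<^bsub>G (nleaves T)\<^esub> g, T) | T g U. (T, g, U) \<in> X}"

definition Fd where
  "Fd d G \<rho> \<kappa> = {tclass d G \<rho> \<kappa> (T, \<one>\<^bsub>G (nleaves T)\<^esub>, U) | T U.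
                      dary d T \<and> dary d U \<and> nleaves T = nleaves U}"

definition Td_normalizer where
  "Td_normalizer d G \<rho> \<kappa> H =
     {x \<in> Td_carrier d G \<rho> \<kappa>.
        {Td_mult d G \<rho> \<kappa> (Td_inv d G \<rho> \<kappa> x) (Td_mult d G \<rho> \<kappa> f x) | f. f \<in> H} = H}"

end

theory Submission
  imports Defs
begin

lemma nleaves_caret:
  "1 \<le> k \<Longrightarrow> k \<le> nleaves T \<Longrightarrow> d \<ge> 1 \<Longrightarrow> nleaves (caret d k T) = nleaves T + d - 1"
  "1 \<le> k \<Longrightarrow> k \<le> sum_list (map nleaves ts) \<Longrightarrow> d \<ge> 1 \<Longrightarrow>
     sum_list (map nleaves (caretl d k ts)) = sum_list (map nleaves ts) + d - 1"
  by (induction d k T and d k ts rule: caret_caretl.induct) (auto simp: sum_list_replicate)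

lemma dary_caret:
  "dary d T \<Longrightarrow> dary d (caret d k T)"
  "(\<forall>t\<in>set ts. dary d t) \<Longrightarrow> length (caretl d k ts) = length ts \<and> (\<forall>t\<in>set (caretl d k ts). dary d t)"
  by (induction d k T and d k ts rule: caret_caretl.induct) auto

lemma nleaves_pos: "dary d T \<Longrightarrow> d \<ge> 1 \<Longrightarrow> nleaves T \<ge> 1"
proof (induction T)
  case Lf then show ?case by simp
next
  case (Nd ts)
  then obtain t where t: "t \<in> set ts" by (cases ts) auto
  then have "nleaves t \<ge> 1" using Nd by auto
  moreover have "nleaves t \<le> sum_list (map nleaves ts)"
    using t by (simp add: member_le_sum_list)
  ultimately show ?case by simp
qed

fun leaves :: "tree \<Rightarrow> nat list list" and leavesl :: "nat \<Rightarrow> tree list \<Rightarrow> nat list list" where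
  "leaves Lf = [[]]"
| "leaves (Nd ts) = leavesl 0 ts"
| "leavesl j [] = []"
| "leavesl j (t # ts) = map (Cons j) (leaves t) @ leavesl (Suc j) ts"

lemma length_leaves:
  "length (leaves T) = nleaves T"
  "length (leavesl j ts) = sum_list (map nleaves ts)"
  by (induction T and j ts rule: leaves_leavesl.induct) auto

lemma leavesl_replicate: "leavesl j (replicate m Lf) = map (\<lambda>i. [i]) [j..<j+m]"
  by (induction m arbitrary: j) (auto simp: upt_rec)

lemma leaves_caret:
  "1 \<le> k \<Longrightarrow> k \<le> nleaves T \<Longrightarrow>
     leaves (caret d k T) = take (k-1) (leaves T) @ map (\<lambda>i. leaves T ! (k-1) @ [i]) [0..<d] @ drop k (leaves T)"
  "1 \<le> k \<Longrightarrow> k \<le> sum_list (map nleaves ts) \<Longrightarrow>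
     leavesl j (caretl d k ts) = take (k-1) (leavesl j ts) @ map (\<lambda>i. leavesl j ts ! (k-1) @ [i]) [0..<d] @ drop k (leavesl j ts)"
proof (induction d k T and d k ts arbitrary: and j rule: caret_caretl.induct)
  case (1 d k)
  then show ?case by (simp add: leavesl_replicate)
next
  case (2 d k ts)
  then show ?case by simp
next
  case (3 d k)
  then show ?case by simp
next
  case (4 d k t ts)
  show ?case
  proof (cases "k \<le> nleaves t")
    case True
    then have "k - 1 < nleaves t" using 4 by simp
    then show ?thesis using 4 True by (simp add: length_leaves take_map drop_map nth_append)
  next
    case False
    have "k - nleaves t \<le> sum_list (map nleaves ts)" "1 \<le> k - nleaves t" using False 4 by auto
    moreover have "\<not> k - Suc 0 < nleaves t" "k - Suc 0 - nleaves t = k - Suc (nleaves t)" using False by auto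
    ultimately show ?thesis using False 4(2)[of "Suc j"]
      by (simp add: length_leaves nth_append)
  qed
qed

lemma set_leavesl: "set (leavesl j ts) = {(j+i) # x | i x. i < length ts \<and> x \<in> set (leaves (ts!i))}"
proof (induction ts arbitrary: j)
  case Nil then show ?case by simp
next
  case (Cons t ts)
  show ?case
  proof (intro equalityI subsetI)
    fix y assume "y \<in> set (leavesl j (t # ts))"
    then consider "y \<in> set (map (Cons j) (leaves t))" | "y \<in> set (leavesl (Suc j) ts)" by auto
    then show "y \<in> {(j+i) # x | i x. i < length (t#ts) \<and> x \<in> set (leaves ((t#ts)!i))}"
    proof cases
      case 1 then obtain x where "y = j # x" "x \<in> set (leaves t)" by auto
      then show ?thesis by (intro CollectI exI[of _ 0]) auto
    next
      case 2 then obtain i x where "y = (Suc j + i) # x" "i < length ts" "x \<in> set (leaves (ts!i))"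
        using Cons by auto
      then show ?thesis by (intro CollectI exI[of _ "Suc i"]) auto
    qed
  next
    fix y assume "y \<in> {(j+i) # x | i x. i < length (t#ts) \<and> x \<in> set (leaves ((t#ts)!i))}"
    then obtain i x where y: "y = (j+i) # x" "i < length (t#ts)" "x \<in> set (leaves ((t#ts)!i))" by blast
    show "y \<in> set (leavesl j (t # ts))"
    proof (cases i)
      case 0 then show ?thesis using y by simp
    next
      case (Suc i')
      then have "y \<in> set (leavesl (Suc j) ts)" using y Cons by auto
      then show ?thesis by simp
    qed
  qed
qed

lemma leaves_digits: "dary d T \<Longrightarrow> x \<in> set (leaves T) \<Longrightarrow> set x \<subseteq> {..<d}"
proof (induction T arbitrary: x)
  case Lf then show ?case by simp
next
  case (Nd ts)
  then obtain i y where "x = i # y" "i < length ts" "y \<in> set (leaves (ts!i))"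
    by (auto simp: set_leavesl)
  moreover have "ts!i \<in> set ts" using \<open>i < length ts\<close> by simp
  ultimately have "set y \<subseteq> {..<d}" "i < d" using Nd.IH[of "ts!i" y] Nd.prems by auto
  then show ?case using \<open>x = i # y\<close> by simp
qed

lemma leaves_antichain: "x \<in> set (leaves T) \<Longrightarrow> y \<in> set (leaves T) \<Longrightarrow> y = x @ p \<Longrightarrow> p = []"
proof (induction T arbitrary: x y)
  case Lf then show ?case by simp
next
  case (Nd ts)
  from Nd.prems obtain i x' where x: "x = i # x'" "i < length ts" "x' \<in> set (leaves (ts!i))"
    by (auto simp: set_leavesl)
  from Nd.prems obtain i' y' where y: "y = i' # y'" "i' < length ts" "y' \<in> set (leaves (ts!i'))"
    by (auto simp: set_leavesl)
  have "i = i'" "y' = x' @ p" using x y Nd.prems by auto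
  moreover have "ts!i \<in> set ts" using x by simp
  ultimately show ?case using Nd.IH x y by blast
qed

lemma leaves_distinct:
  "distinct (leaves T)"
  "distinct (leavesl j ts)"
proof (induction T and j ts rule: leaves_leavesl.induct)
  case (4 j t ts)
  have "x \<notin> set (leavesl (Suc j) ts)" if "x \<in> set (map (Cons j) (leaves t))" for x
    using that by (auto simp: set_leavesl)
  then show ?case using 4 by (auto simp: distinct_map)
qed auto

lemma leaves_child: "i < length ts \<Longrightarrow> {x. i # x \<in> set (leaves (Nd ts))} = set (leaves (ts!i))"
  by (auto simp: set_leavesl)

lemma leaves_Nd_ne: "[] \<notin> set (leaves (Nd ts))"
  by (auto simp: set_leavesl)

lemma leaves_inj: "dary d T \<Longrightarrow> dary d T' \<Longrightarrow> set (leaves T) = set (leaves T') \<Longrightarrow> T = T'"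
proof (induction T arbitrary: T')
  case Lf then show ?case
    by (cases T') (use leaves_Nd_ne in force)+
next
  case (Nd ts)
  show ?case
  proof (cases T')
    case Lf then show ?thesis using Nd.prems leaves_Nd_ne[of ts] by simp
  next
    case (Nd ss)
    have len: "length ts = d" "length ss = d" using Nd Nd.prems by auto
    have "ts = ss"
    proof (rule nth_equalityI)
      show "length ts = length ss" using len by simp
      fix i assume i: "i < length ts"
      have "set (leaves (ts!i)) = set (leaves (ss!i))"
        using leaves_child[of i ts] leaves_child[of i ss] i len Nd.prems Nd by simp
      moreover have "ts!i \<in> set ts" "ss!i \<in> set ss" using i len by auto
      ultimately show "ts!i = ss!i" using Nd.IH Nd.prems \<open>T' = _\<close> by auto
    qed
    then show ?thesis using Nd by simp
  qed
qed

definition app :: "nat list \<Rightarrow> (nat \<Rightarrow> nat) \<Rightarrow> nat \<Rightarrow> nat" where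
  "app xs w = (\<lambda>n. if n < length xs then xs!n else w (n - length xs))"

definition seqs :: "nat \<Rightarrow> (nat \<Rightarrow> nat) set" where
  "seqs d = {w. \<forall>n. w n < d}"

lemma app_Nil[simp]: "app [] w = w"
  by (simp add: app_def)

lemma app_append: "app (xs @ ys) w = app xs (app ys w)"
  by (auto simp: app_def nth_append fun_eq_iff)

lemma app_seqs: "set xs \<subseteq> {..<d} \<Longrightarrow> w \<in> seqs d \<Longrightarrow> app xs w \<in> seqs d"
  unfolding app_def seqs_def by (auto, meson lessThan_iff nth_mem subsetD)

lemma app_inj: "app xs w = app xs w' \<Longrightarrow> w = w'"
proof
  fix n assume "app xs w = app xs w'"
  then have "app xs w (n + length xs) = app xs w' (n + length xs)" by simp
  then show "w n = w' n" by (simp add: app_def)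
qed

lemma app_eq_pfx:
  assumes "app xs w = app ys w'" "length xs \<le> length ys"
  shows "ys = xs @ drop (length xs) ys \<and> w = app (drop (length xs) ys) w'"
proof
  have "take (length xs) ys = xs"
  proof (rule nth_equalityI)
    show "length (take (length xs) ys) = length xs" using assms by simp
    fix n assume "n < length (take (length xs) ys)"
    then have n: "n < length xs" by simp
    have "app xs w n = app ys w' n" using assms by simp
    then show "take (length xs) ys ! n = xs ! n" using n assms by (simp add: app_def)
  qed
  then show ys: "ys = xs @ drop (length xs) ys" by (metis append_take_drop_id)
  have "app xs w = app xs (app (drop (length xs) ys) w')"
    using assms(1) ys by (metis app_append)
  then show "w = app (drop (length xs) ys) w'" by (rule app_inj)
qed

lemma app_pfx_cases:
  assumes "app xs w = app ys w'"
  shows "\<exists>p. (ys = xs @ p \<and> w = app p w') \<or> (xs = ys @ p \<and> w' = app p w)"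
proof (cases "length xs \<le> length ys")
  case True then show ?thesis using app_eq_pfx[OF assms] by blast
next
  case False then show ?thesis using app_eq_pfx[OF assms[symmetric]] by auto
qed

lemma app_eq_all_aux:
  assumes "d \<ge> 2" "\<forall>w\<in>seqs d. app xs w = app ys w" "length xs \<le> length ys"
  shows "xs = ys"
proof -
  define p where "p = drop (length xs) ys"
  have z: "(\<lambda>_. 0) \<in> seqs d" using assms by (simp add: seqs_def)
  have ys: "ys = xs @ p" using app_eq_pfx[of xs "\<lambda>_. 0" ys] assms z by (simp add: p_def)
  have all: "w = app p w" if "w \<in> seqs d" for w
    using app_eq_pfx[of xs w ys w] assms that by (simp add: p_def)
  show ?thesis
  proof (cases p)
    case Nil then show ?thesis using ys by simp
  next
    case (Cons c q)
    define w where "w = (\<lambda>_::nat. if c = 0 then 1 else (0::nat))"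
    have "w \<in> seqs d" using assms by (simp add: seqs_def w_def)
    then have "w 0 = app p w 0" using all by metis
    then show ?thesis using Cons by (simp add: app_def w_def split: if_splits)
  qed
qed

lemma app_eq_all:
  assumes "d \<ge> 2" "\<forall>w\<in>seqs d. app xs w = app ys w"
  shows "xs = ys"
  using app_eq_all_aux[of d xs ys] app_eq_all_aux[of d ys xs] assms by (metis nat_le_linear)

lemma seqs_decomp: "w \<in> seqs d \<Longrightarrow> w = app [w 0] (\<lambda>n. w (Suc n)) \<and> (\<lambda>n. w (Suc n)) \<in> seqs d \<and> w 0 < d"
  by (auto simp: app_def seqs_def fun_eq_iff)

lemma leaves_complete: "dary d T \<Longrightarrow> w \<in> seqs d \<Longrightarrow> \<exists>x\<in>set (leaves T). \<exists>w'\<in>seqs d. w = app x w'"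
proof (induction T arbitrary: w)
  case Lf then show ?case by force
next
  case (Nd ts)
  have dec: "w = app [w 0] (\<lambda>n. w (Suc n))" "(\<lambda>n. w (Suc n)) \<in> seqs d" "w 0 < d"
    using seqs_decomp[OF Nd.prems(2)] by blast+
  have len: "length ts = d" using Nd.prems by simp
  then have "ts!(w 0) \<in> set ts" using dec(3) by simp
  then obtain x w' where x: "x \<in> set (leaves (ts!(w 0)))" "w' \<in> seqs d" "(\<lambda>n. w (Suc n)) = app x w'"
    using Nd.IH[of "ts!(w 0)" "\<lambda>n. w (Suc n)"] Nd.prems dec(2) by auto
  have "w 0 # x \<in> set (leaves (Nd ts))" using x dec(3) len by (auto simp: set_leavesl)
  moreover have "w = app [w 0] (app x w')" using dec(1) x(3) by metis
  moreover have "app [w 0] (app x w') = app (w 0 # x) w'" using app_append[of "[w 0]" x w'] by simp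
  ultimately show ?case using x by metis
qed

definition reach :: "nat \<Rightarrow> tree \<Rightarrow> tree \<Rightarrow> bool" where
  "reach d = (\<lambda>T V. \<exists>k. 1 \<le> k \<and> k \<le> nleaves T \<and> V = caret d k T)\<^sup>*\<^sup>*"

lemma caretl_append:
  "1 \<le> k \<Longrightarrow> k \<le> nleaves t \<Longrightarrow>
    caretl d (sum_list (map nleaves pre) + k) (pre @ t # post) = pre @ caret d k t # post"
  by (induction pre) auto

lemma reach_refl: "reach d T T"
  by (simp add: reach_def)

lemma reach_trans: "reach d T U \<Longrightarrow> reach d U V \<Longrightarrow> reach d T V"
  unfolding reach_def by (rule rtranclp_trans)

lemma reach_step: "1 \<le> k \<Longrightarrow> k \<le> nleaves T \<Longrightarrow> reach d T (caret d k T)"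
  unfolding reach_def by (rule r_into_rtranclp) blast

lemma reach_lift: "reach d t t' \<Longrightarrow> reach d (Nd (pre @ t # post)) (Nd (pre @ t' # post))"
  unfolding reach_def
proof (induction rule: rtranclp_induct)
  case base then show ?case by simp
next
  case (step y z)
  then obtain k where k: "1 \<le> k" "k \<le> nleaves y" "z = caret d k y" by blast
  have "caret d (sum_list (map nleaves pre) + k) (Nd (pre @ y # post)) = Nd (pre @ z # post)"
    using caretl_append[OF k(1,2)] k(3) by simp
  moreover have "1 \<le> sum_list (map nleaves pre) + k"
    "sum_list (map nleaves pre) + k \<le> nleaves (Nd (pre @ y # post))" using k by auto
  ultimately have "(\<lambda>T V. \<exists>k. 1 \<le> k \<and> k \<le> nleaves T \<and> V = caret d k T) (Nd (pre @ y # post)) (Nd (pre @ z # post))"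
    by metis
  then show ?case by (rule rtranclp.rtrancl_into_rtrancl[OF step.IH])
qed

lemma reach_list: "list_all2 (reach d) ts ts' \<Longrightarrow> reach d (Nd (pre @ ts)) (Nd (pre @ ts'))"
proof (induction ts ts' arbitrary: pre rule: list_all2_induct)
  case Nil then show ?case by (rule reach_refl)
next
  case (Cons t ts t' ts')
  have "reach d (Nd (pre @ t # ts)) (Nd (pre @ t' # ts))" using Cons(1) by (rule reach_lift)
  moreover have "reach d (Nd ((pre @ [t']) @ ts)) (Nd ((pre @ [t']) @ ts'))" by (rule Cons(3))
  ultimately show ?case by (simp add: reach_trans)
qed

fun depth :: "tree \<Rightarrow> nat" where
  "depth Lf = 0"
| "depth (Nd ts) = Suc (foldr max (map depth ts) 0)"

fun full :: "nat \<Rightarrow> nat \<Rightarrow> tree" where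
  "full d 0 = Lf"
| "full d (Suc h) = Nd (replicate d (full d h))"

lemma dary_full: "dary d (full d h)"
  by (induction h) auto

lemma foldr_max_ge: "x \<in> set xs \<Longrightarrow> x \<le> foldr max xs (0::nat)"
  by (induction xs) auto

lemma reach_Lf_full: "d \<ge> 1 \<Longrightarrow> reach d Lf (full d h)"
proof (induction h)
  case 0 then show ?case by (simp add: reach_refl)
next
  case (Suc h)
  have "reach d Lf (Nd (replicate d Lf))" using reach_step[of 1 Lf d] by simp
  moreover have "list_all2 (reach d) (replicate d Lf) (replicate d (full d h))"
    using Suc by (simp add: list_all2_conv_all_nth)
  then have "reach d (Nd ([] @ replicate d Lf)) (Nd ([] @ replicate d (full d h)))"
    by (rule reach_list)
  ultimately show ?case by (simp add: reach_trans)
qed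

lemma reach_full: "dary d T \<Longrightarrow> depth T \<le> h \<Longrightarrow> d \<ge> 1 \<Longrightarrow> reach d T (full d h)"
proof (induction T arbitrary: h)
  case Lf then show ?case by (simp add: reach_Lf_full)
next
  case (Nd ts)
  then obtain h' where h: "h = Suc h'" by (cases h) auto
  have "list_all2 (reach d) ts (replicate d (full d h'))"
  proof (unfold list_all2_conv_all_nth, intro conjI allI impI)
    show "length ts = length (replicate d (full d h'))" using Nd by simp
    fix i assume "i < length ts"
    then have i: "ts!i \<in> set ts" by simp
    then have "depth (ts!i) \<le> h'" using Nd.prems h foldr_max_ge[of "depth (ts!i)" "map depth ts"] by simp
    then show "reach d (ts ! i) (replicate d (full d h') ! i)"
      using Nd.IH[OF i] Nd.prems i \<open>i < length ts\<close> by simp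
  qed
  then have "reach d (Nd ([] @ ts)) (Nd ([] @ replicate d (full d h')))" by (rule reach_list)
  then show ?case using h by simp
qed

lemma reach_dary: "reach d T V \<Longrightarrow> dary d T \<Longrightarrow> dary d V"
  unfolding reach_def by (induction rule: rtranclp_induct) (auto simp: dary_caret)

definition Pset :: "nat \<Rightarrow> nat list \<Rightarrow> nat list \<Rightarrow> ((nat \<Rightarrow> nat) \<times> (nat \<Rightarrow> nat)) set" where
  "Pset d a b = {(app a w, app b w) | w. w \<in> seqs d}"

definition Rel :: "nat \<Rightarrow> tree \<Rightarrow> tree \<Rightarrow> ((nat \<Rightarrow> nat) \<times> (nat \<Rightarrow> nat)) set" where
  "Rel d T U = (\<Union>p\<in>set (zip (leaves T) (leaves U)). Pset d (fst p) (snd p))"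

lemma Rel_mem: "x \<in> Rel d T U \<longleftrightarrow> (\<exists>a b w. (a,b) \<in> set (zip (leaves T) (leaves U)) \<and> w \<in> seqs d \<and> x = (app a w, app b w))"
  unfolding Rel_def Pset_def by force

lemma in_zip_swap: "(a,b) \<in> set (zip xs ys) \<longleftrightarrow> (b,a) \<in> set (zip ys xs)"
  by (auto simp: set_zip)

lemma Pset_split: "Pset d a b = (\<Union>i<d. Pset d (a @ [i]) (b @ [i]))"
proof (intro equalityI subsetI)
  fix x assume "x \<in> Pset d a b"
  then obtain w where w: "x = (app a w, app b w)" "w \<in> seqs d" by (auto simp: Pset_def)
  have dec: "w = app [w 0] (\<lambda>n. w (Suc n))" "(\<lambda>n. w (Suc n)) \<in> seqs d" "w 0 < d"
    using seqs_decomp[OF w(2)] by blast+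
  have "app a w = app (a @ [w 0]) (\<lambda>n. w (Suc n))" "app b w = app (b @ [w 0]) (\<lambda>n. w (Suc n))"
    using dec(1) by (metis app_append)+
  then have "x \<in> Pset d (a @ [w 0]) (b @ [w 0])" using w dec(2) by (auto simp: Pset_def)
  then show "x \<in> (\<Union>i<d. Pset d (a @ [i]) (b @ [i]))" using dec(3) by blast
next
  fix x assume "x \<in> (\<Union>i<d. Pset d (a @ [i]) (b @ [i]))"
  then obtain i w where w: "i < d" "x = (app (a @ [i]) w, app (b @ [i]) w)" "w \<in> seqs d"
    by (auto simp: Pset_def)
  have "app [i] w \<in> seqs d" using w by (intro app_seqs) auto
  then show "x \<in> Pset d a b" using w by (auto simp: Pset_def app_append)
qed

lemma Rel_caret:
  assumes "1 \<le> k" "k \<le> nleaves T" "nleaves T = nleaves U"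
  shows "Rel d (caret d k T) (caret d k U) = Rel d T U"
proof -
  define L where "L = leaves T"
  define M where "M = leaves U"
  obtain j where kj: "k = Suc j" using assms(1) by (cases k) auto
  have len: "length L = nleaves T" "length M = nleaves T" using assms by (auto simp: L_def M_def length_leaves)
  have LL: "leaves (caret d k T) = take j L @ map (\<lambda>i. L ! j @ [i]) [0..<d] @ drop k L"
    using leaves_caret(1)[OF assms(1,2)] kj by (simp add: L_def)
  have MM: "leaves (caret d k U) = take j M @ map (\<lambda>i. M ! j @ [i]) [0..<d] @ drop k M"
    using leaves_caret(1)[of k U d] assms kj by (simp add: M_def)
  define X where "X = (\<Union>p\<in>set (zip (take j L) (take j M)). Pset d (fst p) (snd p))"
  define Y where "Y = (\<Union>p\<in>set (zip (drop k L) (drop k M)). Pset d (fst p) (snd p))"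
  have z1: "zip (leaves (caret d k T)) (leaves (caret d k U)) =
     zip (take j L) (take j M) @ map (\<lambda>i. (L ! j @ [i], M ! j @ [i])) [0..<d] @ zip (drop k L) (drop k M)"
    unfolding LL MM using len by (simp add: zip_map_map zip_same_conv_map comp_def)
  have Ld: "L = take j L @ L!j # drop k L" "M = take j M @ M!j # drop k M"
    using id_take_nth_drop[of j L] id_take_nth_drop[of j M] assms len kj by auto
  have z2: "zip L M = zip (take j L) (take j M) @ (L!j, M!j) # zip (drop k L) (drop k M)"
  proof -
    have "zip L M = zip (take j L @ L!j # drop k L) (take j M @ M!j # drop k M)"
      by (simp only: Ld[symmetric])
    also have "\<dots> = zip (take j L) (take j M) @ (L!j, M!j) # zip (drop k L) (drop k M)"
      using len by simp
    finally show ?thesis .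
  qed
  have A: "Rel d T U = X \<union> Pset d (L!j) (M!j) \<union> Y"
    unfolding Rel_def L_def[symmetric] M_def[symmetric] z2 X_def Y_def by (simp add: Un_assoc Un_left_commute)
  have B: "Rel d (caret d k T) (caret d k U) = X \<union> (\<Union>i\<in>set [0..<d]. Pset d (L!j @ [i]) (M!j @ [i])) \<union> Y"
    unfolding Rel_def z1 X_def Y_def by (simp add: Un_assoc)
  have C: "(\<Union>i\<in>set [0..<d]. Pset d (L!j @ [i]) (M!j @ [i])) = Pset d (L!j) (M!j)"
    using Pset_split[of d "L!j" "M!j"] by (simp add: atLeast0LessThan)
  show ?thesis unfolding A B C by (rule refl)
qed

lemma leaves_app_eq:
  assumes "a \<in> set (leaves T)" "a' \<in> set (leaves T)" "app a w = app a' w'"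
  shows "a = a' \<and> w = w'"
proof -
  obtain p where "(a' = a @ p) \<or> (a = a' @ p)"
    using app_pfx_cases[OF assms(3)] by blast
  then have "a = a'"
  proof
    assume "a' = a @ p" then show "a = a'" using leaves_antichain[OF assms(1,2)] by simp
  next
    assume "a = a' @ p" then show "a = a'" using leaves_antichain[OF assms(2,1)] by simp
  qed
  then show ?thesis using assms(3) app_inj by blast
qed

lemma zip_idx:
  assumes "distinct L" "length L = length N" "(L!i, c) \<in> set (zip L N)" "i < length L"
  shows "c = N!i"
proof -
  obtain j where j: "j < length L" "L!i = L!j" "c = N!j" using assms(2,3) by (auto simp: set_zip)
  have "i = j" using nth_eq_iff_index_eq[OF assms(1) assms(4) j(1)] j(2) by simp
  then show ?thesis using j by simp
qed

lemma Rel_comp: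
  assumes "nleaves T = nleaves U" "nleaves U = nleaves W"
  shows "Rel d T U O Rel d U W = Rel d T W"
proof (intro equalityI subsetI)
  fix x assume "x \<in> Rel d T U O Rel d U W"
  then obtain t u w u' v w' where
    tu: "(t,u) \<in> set (zip (leaves T) (leaves U))" "w \<in> seqs d" and
    uv: "(u',v) \<in> set (zip (leaves U) (leaves W))" "w' \<in> seqs d" and
    eq: "app u w = app u' w'" and x: "x = (app t w, app v w')"
    by (auto simp: Rel_def Pset_def)
  have "u = u'" "w = w'" using leaves_app_eq[OF set_zip_rightD[OF tu(1)] set_zip_leftD[OF uv(1)] eq] by auto
  obtain i where i: "i < nleaves T" "t = leaves T ! i" "u = leaves U ! i"
    using tu(1) assms by (auto simp: set_zip length_leaves)
  have "v = leaves W ! i" using zip_idx[of "leaves U" "leaves W" i v] uv(1) i assms \<open>u = u'\<close>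
    by (simp add: leaves_distinct length_leaves)
  then have "(t, v) \<in> set (zip (leaves T) (leaves W))" using i assms
    by (auto simp: set_zip length_leaves)
  then show "x \<in> Rel d T W" using x \<open>w = w'\<close> tu(2) by (force simp: Rel_def Pset_def)
next
  fix x assume "x \<in> Rel d T W"
  then obtain t v w where tv: "(t,v) \<in> set (zip (leaves T) (leaves W))" "w \<in> seqs d" "x = (app t w, app v w)"
    by (auto simp: Rel_def Pset_def)
  then obtain i where i: "i < nleaves T" "t = leaves T ! i" "v = leaves W ! i"
    using assms by (auto simp: set_zip length_leaves)
  have "(t, leaves U ! i) \<in> set (zip (leaves T) (leaves U))" "(leaves U ! i, v) \<in> set (zip (leaves U) (leaves W))"
    using i assms by (auto simp: set_zip length_leaves)
  then have "(app t w, app (leaves U ! i) w) \<in> Rel d T U" "(app (leaves U ! i) w, app v w) \<in> Rel d U W"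
    using tv by (force simp: Rel_def Pset_def)+
  then show "x \<in> Rel d T U O Rel d U W" using tv by blast
qed

lemma Rel_conv: "(Rel d T U)\<inverse> = Rel d U T"
proof (intro equalityI subsetI)
  fix x assume "x \<in> (Rel d T U)\<inverse>"
  then obtain a b w where "(a,b) \<in> set (zip (leaves T) (leaves U))" "w \<in> seqs d" "x = (app b w, app a w)"
    unfolding Rel_mem converse_iff by (metis prod.collapse fst_conv snd_conv Rel_mem converse_iff)
  then show "x \<in> Rel d U T" unfolding Rel_mem by (metis in_zip_swap)
next
  fix x assume "x \<in> Rel d U T"
  then obtain a b w where "(a,b) \<in> set (zip (leaves U) (leaves T))" "w \<in> seqs d" "x = (app a w, app b w)"
    unfolding Rel_mem by blast
  then have "(snd x, fst x) \<in> Rel d T U" unfolding Rel_mem by (metis in_zip_swap fst_conv snd_conv)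
  then show "x \<in> (Rel d T U)\<inverse>" by (metis converse_iff prod.collapse)
qed

lemma Rel_sub: "dary d T \<Longrightarrow> dary d U \<Longrightarrow> Rel d T U \<subseteq> seqs d \<times> seqs d"
proof
  fix x assume dT: "dary d T" and dU: "dary d U" and "x \<in> Rel d T U"
  then obtain a b w where ab: "(a,b) \<in> set (zip (leaves T) (leaves U))" "w \<in> seqs d" "x = (app a w, app b w)"
    unfolding Rel_mem by blast
  have "set a \<subseteq> {..<d}" using leaves_digits[OF dT set_zip_leftD[OF ab(1)]] .
  moreover have "set b \<subseteq> {..<d}" using leaves_digits[OF dU set_zip_rightD[OF ab(1)]] .
  ultimately show "x \<in> seqs d \<times> seqs d" using ab app_seqs by blast
qed

lemma Rel_diag: "dary d T \<Longrightarrow> Rel d T T = Id_on (seqs d)"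
proof (intro equalityI subsetI)
  fix x assume "x \<in> Rel d T T" "dary d T"
  then obtain a b w where ab: "(a,b) \<in> set (zip (leaves T) (leaves T))" "w \<in> seqs d" "x = (app a w, app b w)"
    unfolding Rel_mem by blast
  moreover then have "a = b" by (auto simp: set_zip)
  moreover have "set a \<subseteq> {..<d}" using leaves_digits[OF \<open>dary d T\<close> set_zip_leftD[OF ab(1)]] .
  ultimately show "x \<in> Id_on (seqs d)" using app_seqs by blast
next
  fix x assume "x \<in> Id_on (seqs d)" "dary d T"
  then obtain w where w: "x = (w, w)" "w \<in> seqs d" by auto
  then obtain a w' where a: "a \<in> set (leaves T)" "w' \<in> seqs d" "w = app a w'"
    using leaves_complete[OF \<open>dary d T\<close>] by blast
  moreover then have "(a, a) \<in> set (zip (leaves T) (leaves T))"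
    by (auto simp: set_zip in_set_conv_nth)
  ultimately show "x \<in> Rel d T T" using w unfolding Rel_mem by blast
qed

lemma Rel_inj:
  assumes "d \<ge> 2" "dary d V" "dary d B" "dary d C" "nleaves V = nleaves B" "nleaves V = nleaves C"
    "Rel d V B = Rel d V C"
  shows "B = C"
proof -
  define L where "L = leaves V"
  define M where "M = leaves B"
  define N where "N = leaves C"
  have len: "length L = nleaves V" "length M = nleaves V" "length N = nleaves V"
    using assms by (auto simp: L_def M_def N_def length_leaves)
  have "M = N"
  proof (rule nth_equalityI)
    show "length M = length N" using len by simp
    fix i assume i: "i < length M"
    have "app (M!i) w = app (N!i) w" if w: "w \<in> seqs d" for w
    proof -
      have "(L!i, M!i) \<in> set (zip L M)" using i len by (auto simp: set_zip)
      then have "(app (L!i) w, app (M!i) w) \<in> Rel d V B" using w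
        unfolding L_def M_def Rel_mem by blast
      then have "(app (L!i) w, app (M!i) w) \<in> Rel d V C" using assms(7) by simp
      then obtain a c w' where ac: "(a, c) \<in> set (zip L N)" "w' \<in> seqs d"
        "app (L!i) w = app a w'" "app (M!i) w = app c w'"
        unfolding Rel_mem L_def N_def by blast
      have "L!i \<in> set L" using i len by simp
      then have "L!i = a" "w = w'" using leaves_app_eq[of "L!i" V a w w'] ac set_zip_leftD[OF ac(1)]
        by (auto simp: L_def)
      then have "c = N!i" using zip_idx[of L N i c] ac i len by (simp add: L_def leaves_distinct)
      then show ?thesis using ac \<open>w = w'\<close> by simp
    qed
    then show "M!i = N!i" using app_eq_all[OF assms(1)] by blast
  qed
  then show ?thesis using leaves_inj[OF assms(3,4)] by (simp add: M_def N_def)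
qed

locale CS =
  fixes d :: nat and G :: "nat \<Rightarrow> 'g monoid" and \<rho> :: "nat \<Rightarrow> 'g \<Rightarrow> nat \<Rightarrow> nat"
    and \<kappa> :: "nat \<Rightarrow> nat \<Rightarrow> 'g \<Rightarrow> 'g"
  assumes d2: "d \<ge> 2" and cs: "cloning_system d G \<rho> \<kappa>"
begin

abbreviation "trip \<equiv> triples d G"
abbreviation "E \<equiv> expansion d G \<rho> \<kappa>"
abbreviation "Q \<equiv> triple_equiv d G \<rho> \<kappa>"
abbreviation "cls \<equiv> tclass d G \<rho> \<kappa>"

lemma grp_ax: "\<forall>n\<ge>1. group (G n)"
  using cs unfolding cloning_system_def by (rule conjunct1)

lemma grp: "n \<ge> 1 \<Longrightarrow> group (G n)"
  using grp_ax by simp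

lemma rho_ax: "\<forall>n\<ge>1. \<rho> n \<in> hom (G n) (sym_group n)"
  using cs unfolding cloning_system_def by (rule conjunct1[OF conjunct2])

lemma rho_hom: "n \<ge> 1 \<Longrightarrow> \<rho> n \<in> hom (G n) (sym_group n)"
  using rho_ax by simp

lemma rho_perm: "n \<ge> 1 \<Longrightarrow> g \<in> carrier (G n) \<Longrightarrow> \<rho> n g permutes {1..n}"
  using rho_hom[of n] by (auto simp: hom_def sym_group_carrier)

lemma rho_range: "n \<ge> 1 \<Longrightarrow> g \<in> carrier (G n) \<Longrightarrow> k \<in> {1..n} \<Longrightarrow> \<rho> n g k \<in> {1..n}"
  using rho_perm permutes_in_image by metis

lemma rho_one: "n \<ge> 1 \<Longrightarrow> \<rho> n \<one>\<^bsub>G n\<^esub> = id"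
  using hom_one[OF rho_hom grp sym_group_is_group] by (simp add: sym_group_one)

lemma kappa_ax: "\<forall>n\<ge>1. \<forall>k\<in>{1..n}. \<kappa> n k ` carrier (G n) \<subseteq> carrier (G (n + d - 1))
                        \<and> inj_on (\<kappa> n k) (carrier (G n))"
  using cs unfolding cloning_system_def by (rule conjunct1[OF conjunct2[OF conjunct2]])

lemma kappa_carrier: "n \<ge> 1 \<Longrightarrow> 1 \<le> k \<Longrightarrow> k \<le> n \<Longrightarrow> g \<in> carrier (G n) \<Longrightarrow> \<kappa> n k g \<in> carrier (G (n + d - 1))"
proof -
  assume a: "n \<ge> 1" "1 \<le> k" "k \<le> n" "g \<in> carrier (G n)"
  then have "\<kappa> n k ` carrier (G n) \<subseteq> carrier (G (n + d - 1))" using kappa_ax by simp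
  then show ?thesis using a(4) by blast
qed

lemma kappa_inj: "n \<ge> 1 \<Longrightarrow> 1 \<le> k \<Longrightarrow> k \<le> n \<Longrightarrow> inj_on (\<kappa> n k) (carrier (G n))"
  using kappa_ax by simp

lemma C1: "n \<ge> 1 \<Longrightarrow> 1 \<le> k \<Longrightarrow> k \<le> n \<Longrightarrow> g \<in> carrier (G n) \<Longrightarrow> h \<in> carrier (G n) \<Longrightarrow>
   \<kappa> n k (g \<otimes>\<^bsub>G n\<^esub> h) = \<kappa> n (\<rho> n h k) g \<otimes>\<^bsub>G (n + d - 1)\<^esub> \<kappa> n k h"
proof -
  assume a: "n \<ge> 1" "1 \<le> k" "k \<le> n" "g \<in> carrier (G n)" "h \<in> carrier (G n)"
  have all: "\<forall>n\<ge>1. \<forall>k\<in>{1..n}. \<forall>g\<in>carrier (G n). \<forall>h\<in>carrier (G n).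
        \<kappa> n k (g \<otimes>\<^bsub>G n\<^esub> h) = \<kappa> n (\<rho> n h k) g \<otimes>\<^bsub>G (n + d - 1)\<^esub> \<kappa> n k h"
    using cs unfolding cloning_system_def by (rule conjunct1[OF conjunct2[OF conjunct2[OF conjunct2]]])
  have k': "k \<in> {1..n}" using a by simp
  show ?thesis using all[rule_format, OF a(1) k' a(4) a(5)] .
qed

lemma kappa_one: "n \<ge> 1 \<Longrightarrow> 1 \<le> k \<Longrightarrow> k \<le> n \<Longrightarrow> \<kappa> n k \<one>\<^bsub>G n\<^esub> = \<one>\<^bsub>G (n + d - 1)\<^esub>"
proof -
  assume n: "n \<ge> 1" and k: "1 \<le> k" "k \<le> n"
  have g1: "group (G n)" using grp n by auto
  have g2: "group (G (n + d - 1))" using grp[of "n + d - 1"] n d2 by simp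
  have o: "\<one>\<^bsub>G n\<^esub> \<in> carrier (G n)" using group.is_monoid[OF g1] monoid.one_closed by blast
  have c: "\<kappa> n k \<one>\<^bsub>G n\<^esub> \<in> carrier (G (n + d - 1))" using kappa_carrier[OF n k o] .
  have e1: "\<kappa> n k (\<one>\<^bsub>G n\<^esub> \<otimes>\<^bsub>G n\<^esub> \<one>\<^bsub>G n\<^esub>) = \<kappa> n k \<one>\<^bsub>G n\<^esub> \<otimes>\<^bsub>G (n + d - 1)\<^esub> \<kappa> n k \<one>\<^bsub>G n\<^esub>"
    using C1[OF n k o o] unfolding rho_one[OF n] id_def .
  have e2: "\<one>\<^bsub>G n\<^esub> \<otimes>\<^bsub>G n\<^esub> \<one>\<^bsub>G n\<^esub> = \<one>\<^bsub>G n\<^esub>" by (rule monoid.l_one[OF group.is_monoid[OF g1] o])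
  have eq: "\<kappa> n k \<one>\<^bsub>G n\<^esub> = \<kappa> n k \<one>\<^bsub>G n\<^esub> \<otimes>\<^bsub>G (n + d - 1)\<^esub> \<kappa> n k \<one>\<^bsub>G n\<^esub>"
    using e1 unfolding e2 .
  show ?thesis using iffD1[OF group.l_cancel_one'[OF g2 c c] eq] .
qed

lemma exp_intro:
  assumes "(T, g, U) \<in> trip" "1 \<le> k" "k \<le> nleaves T"
  shows "((T, g, U), (caret d (\<rho> (nleaves T) g k) T, \<kappa> (nleaves T) k g, caret d k U)) \<in> E"
  unfolding expansion_def
  apply (rule CollectI)
  apply (rule exI[of _ T], rule exI[of _ g], rule exI[of _ U], rule exI[of _ k])
  using assms by simp

lemma exp_elim:
  assumes "(x, y) \<in> E"
  obtains T g U k where "x = (T, g, U)" "y = (caret d (\<rho> (nleaves T) g k) T, \<kappa> (nleaves T) k g, caret d k U)"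
    "(T, g, U) \<in> trip" "1 \<le> k" "k \<le> nleaves T"
  using assms unfolding expansion_def mem_Collect_eq
  apply (elim exE conjE)
  subgoal for T g U k by (rule that[of T g U k]) auto
  done

lemma trip_iff: "(T, g, U) \<in> trip \<longleftrightarrow> dary d T \<and> dary d U \<and> nleaves T = nleaves U \<and> g \<in> carrier (G (nleaves T))"
  unfolding triples_def by simp

lemma trip_pos: "(T, g, U) \<in> trip \<Longrightarrow> nleaves T \<ge> 1"
  using nleaves_pos d2 by (auto simp: trip_iff)

lemma exp_trip: assumes "(x, y) \<in> E" shows "x \<in> trip" "y \<in> trip"
proof -
  obtain T g U k where e: "x = (T, g, U)" "y = (caret d (\<rho> (nleaves T) g k) T, \<kappa> (nleaves T) k g, caret d k U)"
    "(T, g, U) \<in> trip" "1 \<le> k" "k \<le> nleaves T" using exp_elim[OF assms] by blast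
  show "x \<in> trip" using e by simp
  define n where "n = nleaves T"
  have n: "n \<ge> 1" using trip_pos e n_def by simp
  have g: "g \<in> carrier (G n)" "dary d T" "dary d U" "nleaves U = n" using e n_def by (auto simp: trip_iff)
  have r: "\<rho> n g k \<in> {1..n}" using rho_range[OF n g(1)] e n_def by simp
  have "nleaves (caret d (\<rho> n g k) T) = n + d - 1" using nleaves_caret(1)[of "\<rho> n g k" T d] r d2 n_def by simp
  moreover have "nleaves (caret d k U) = n + d - 1" using nleaves_caret(1)[of k U d] e g d2 n_def by simp
  moreover have "\<kappa> n k g \<in> carrier (G (n + d - 1))" using kappa_carrier[OF n] e g n_def by simp
  moreover have "dary d (caret d (\<rho> n g k) T)" "dary d (caret d k U)" using dary_caret(1) g by auto
  moreover have "y = (caret d (\<rho> n g k) T, \<kappa> n k g, caret d k U)" using e(2) n_def by simp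
  ultimately show "y \<in> trip" by (simp add: trip_iff)
qed

lemma Q_def': "Q = (E \<union> E\<inverse>)\<^sup>* \<inter> (trip \<times> trip)"
  unfolding triple_equiv_def by simp

lemma Q_trip: "(x, y) \<in> Q \<Longrightarrow> x \<in> trip \<and> y \<in> trip"
  unfolding Q_def' by blast

lemma Q_refl: "x \<in> trip \<Longrightarrow> (x, x) \<in> Q"
  unfolding Q_def' by blast

lemma Q_sym: "(x, y) \<in> Q \<Longrightarrow> (y, x) \<in> Q"
proof -
  assume a: "(x, y) \<in> Q"
  then have "(x, y) \<in> (E \<union> E\<inverse>)\<^sup>*" unfolding Q_def' by blast
  then have "(y, x) \<in> ((E \<union> E\<inverse>)\<inverse>)\<^sup>*" by (rule rtrancl_converseI)
  moreover have "(E \<union> E\<inverse>)\<inverse> = E \<union> E\<inverse>" by (simp add: converse_Un Un_commute)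
  ultimately show ?thesis using a unfolding Q_def' by auto
qed

lemma Q_trans: "(x, y) \<in> Q \<Longrightarrow> (y, z) \<in> Q \<Longrightarrow> (x, z) \<in> Q"
  unfolding Q_def' by (blast intro: rtrancl_trans)

lemma E_Q: "(x, y) \<in> E \<Longrightarrow> (x, y) \<in> Q"
  using exp_trip unfolding Q_def' by blast

lemma cls_mem: "y \<in> cls x \<longleftrightarrow> (x, y) \<in> Q"
  unfolding tclass_def by blast

lemma cls_self: "x \<in> trip \<Longrightarrow> x \<in> cls x"
  using Q_refl cls_mem by blast

lemma cls_eq: "(x, y) \<in> Q \<Longrightarrow> cls x = cls y"
  unfolding tclass_def using Q_sym Q_trans by blast

definition ones where "ones = {(T, g, U). (T, g, U) \<in> trip \<and> g = \<one>\<^bsub>G (nleaves T)\<^esub>}"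

definition relt :: "'g triple \<Rightarrow> _" where "relt x = Rel d (fst x) (snd (snd x))"

lemma one_carrier: "n \<ge> 1 \<Longrightarrow> \<one>\<^bsub>G n\<^esub> \<in> carrier (G n)"
  using grp monoid.one_closed group.is_monoid by blast

lemma exp_one:
  assumes "(T, \<one>\<^bsub>G (nleaves T)\<^esub>, U) \<in> trip" "1 \<le> k" "k \<le> nleaves T"
  shows "((T, \<one>\<^bsub>G (nleaves T)\<^esub>, U), (caret d k T, \<one>\<^bsub>G (nleaves (caret d k T))\<^esub>, caret d k U)) \<in> E"
proof -
  have n: "nleaves T \<ge> 1" using trip_pos assms by blast
  have "nleaves (caret d k T) = nleaves T + d - 1" using nleaves_caret(1) assms d2 by simp
  then show ?thesis using exp_intro[OF assms] rho_one[OF n] kappa_one[OF n assms(2,3)] by simp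
qed

lemma ones_step:
  assumes "(x, y) \<in> E"
  shows "(x \<in> ones \<longleftrightarrow> y \<in> ones) \<and> (x \<in> ones \<longrightarrow> relt x = relt y)"
proof -
  obtain T g U k where e: "x = (T, g, U)" "y = (caret d (\<rho> (nleaves T) g k) T, \<kappa> (nleaves T) k g, caret d k U)"
    "(T, g, U) \<in> trip" "1 \<le> k" "k \<le> nleaves T" using exp_elim[OF assms] by blast
  define n where "n = nleaves T"
  have y: "y = (caret d (\<rho> n g k) T, \<kappa> n k g, caret d k U)" using e(2) n_def by simp
  have k: "1 \<le> k" "k \<le> n" using e(4,5) n_def by auto
  have n: "n \<ge> 1" using trip_pos e(3) n_def by simp
  have g: "g \<in> carrier (G n)" "dary d T" "dary d U" "nleaves U = n" using e(3) n_def by (auto simp: trip_iff)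
  have r: "\<rho> n g k \<in> {1..n}" using rho_range[OF n g(1)] k by simp
  have nl: "nleaves (caret d (\<rho> n g k) T) = n + d - 1" using nleaves_caret(1)[of "\<rho> n g k" T d] r d2 n_def by simp
  have yt: "y \<in> trip" using exp_trip(2)[OF assms] .
  have iff: "g = \<one>\<^bsub>G n\<^esub> \<longleftrightarrow> \<kappa> n k g = \<one>\<^bsub>G (n + d - 1)\<^esub>"
  proof
    assume "g = \<one>\<^bsub>G n\<^esub>" then show "\<kappa> n k g = \<one>\<^bsub>G (n + d - 1)\<^esub>" using kappa_one[OF n k] by simp
  next
    assume "\<kappa> n k g = \<one>\<^bsub>G (n + d - 1)\<^esub>"
    then have "\<kappa> n k g = \<kappa> n k \<one>\<^bsub>G n\<^esub>" using kappa_one[OF n k] by simp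
    then show "g = \<one>\<^bsub>G n\<^esub>" using inj_onD[OF kappa_inj[OF n k] _ g(1) one_carrier[OF n]] by blast
  qed
  have xo: "x \<in> ones \<longleftrightarrow> g = \<one>\<^bsub>G n\<^esub>" using e(1,3) n_def by (simp add: ones_def)
  have yo: "y \<in> ones \<longleftrightarrow> \<kappa> n k g = \<one>\<^bsub>G (n + d - 1)\<^esub>" using yt nl unfolding y by (simp add: ones_def)
  have "relt x = relt y" if "x \<in> ones"
  proof -
    have "g = \<one>\<^bsub>G n\<^esub>" using that xo by simp
    then have rk: "\<rho> n g k = k" using rho_one[OF n] by simp
    have "relt y = Rel d (caret d k T) (caret d k U)" unfolding relt_def y rk fst_conv snd_conv by (rule refl)
    also have "\<dots> = Rel d T U"
    proof -
      have kk: "k \<le> nleaves T" using k(2) unfolding n_def .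
      have "nleaves U = nleaves T" using g(4) unfolding n_def .
      then show ?thesis using Rel_caret[OF k(1) kk] by simp
    qed
    also have "\<dots> = relt x" unfolding relt_def e(1) fst_conv snd_conv by (rule refl)
    finally show ?thesis by simp
  qed
  then show ?thesis using xo yo iff by blast
qed

lemma ones_path:
  assumes "(x, y) \<in> Q" "x \<in> ones"
  shows "y \<in> ones \<and> relt x = relt y"
proof -
  have "(x, y) \<in> (E \<union> E\<inverse>)\<^sup>*" using assms unfolding Q_def' by blast
  then show ?thesis
  proof (induction rule: rtrancl_induct)
    case base then show ?case using assms by simp
  next
    case (step y z)
    then consider "(y, z) \<in> E" | "(z, y) \<in> E" by blast
    then show ?case
    proof cases
      case 1 then show ?thesis using ones_step[OF 1] step.IH by simp
    next
      case 2 then show ?thesis using ones_step[OF 2] step.IH by simp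
    qed
  qed
qed

lemma lift:
  assumes "reach d T V" "(T, \<one>\<^bsub>G (nleaves T)\<^esub>, U) \<in> trip"
  shows "\<exists>U2. ((T, \<one>\<^bsub>G (nleaves T)\<^esub>, U), (V, \<one>\<^bsub>G (nleaves V)\<^esub>, U2)) \<in> Q"
  using assms(1) unfolding reach_def
proof (induction rule: rtranclp_induct)
  case base then show ?case using Q_refl assms(2) by blast
next
  case (step V1 V2)
  then obtain U2 where U2: "((T, \<one>\<^bsub>G (nleaves T)\<^esub>, U), (V1, \<one>\<^bsub>G (nleaves V1)\<^esub>, U2)) \<in> Q" by blast
  obtain k where k: "1 \<le> k" "k \<le> nleaves V1" "V2 = caret d k V1" using step by blast
  have "(V1, \<one>\<^bsub>G (nleaves V1)\<^esub>, U2) \<in> trip" using Q_trip[OF U2] by simp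
  then have "((V1, \<one>\<^bsub>G (nleaves V1)\<^esub>, U2), (V2, \<one>\<^bsub>G (nleaves V2)\<^esub>, caret d k U2)) \<in> Q"
    using exp_one[OF _ k(1,2)] k(3) E_Q by blast
  then show ?case using U2 Q_trans by blast
qed

end

context CS begin

definition C where
  "C r = {(T, \<one>\<^bsub>G (nleaves T)\<^esub>, U) | T U. dary d T \<and> dary d U \<and> nleaves T = nleaves U \<and> Rel d T U = r}"

lemma C_mem: "(T, g, U) \<in> C r \<longleftrightarrow> dary d T \<and> dary d U \<and> nleaves T = nleaves U \<and> Rel d T U = r \<and> g = \<one>\<^bsub>G (nleaves T)\<^esub>"
  unfolding C_def by blast

lemma one_trip: "dary d T \<Longrightarrow> dary d U \<Longrightarrow> nleaves T = nleaves U \<Longrightarrow> (T, \<one>\<^bsub>G (nleaves T)\<^esub>, U) \<in> trip"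
  using one_carrier nleaves_pos d2 by (simp add: trip_iff)

lemma ones_iff: "(T, g, U) \<in> ones \<longleftrightarrow> (T, g, U) \<in> trip \<and> g = \<one>\<^bsub>G (nleaves T)\<^esub>"
  unfolding ones_def by simp

lemma cls_one:
  assumes A: "dary d A" "dary d B" "nleaves A = nleaves B"
  shows "cls (A, \<one>\<^bsub>G (nleaves A)\<^esub>, B) = C (Rel d A B)"
proof (intro equalityI subsetI)
  let ?x = "(A, \<one>\<^bsub>G (nleaves A)\<^esub>, B)"
  have xt: "?x \<in> trip" using one_trip A by blast
  have xo: "?x \<in> ones" using xt by (simp add: ones_iff)
  fix y assume "y \<in> cls ?x"
  then have q: "(?x, y) \<in> Q" by (simp add: cls_mem)
  obtain T g U where y: "y = (T, g, U)" by (cases y) auto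
  have "y \<in> ones" "relt ?x = relt y" using ones_path[OF q xo] by auto
  then have "(T, g, U) \<in> trip" "g = \<one>\<^bsub>G (nleaves T)\<^esub>" "Rel d A B = Rel d T U"
    unfolding y by (auto simp: ones_iff relt_def)
  then show "y \<in> C (Rel d A B)" unfolding y by (auto simp: C_mem trip_iff)
next
  let ?x = "(A, \<one>\<^bsub>G (nleaves A)\<^esub>, B)"
  have xt: "?x \<in> trip" using one_trip A by blast
  fix y assume "y \<in> C (Rel d A B)"
  then obtain T U where y: "y = (T, \<one>\<^bsub>G (nleaves T)\<^esub>, U)" "dary d T" "dary d U" "nleaves T = nleaves U"
    "Rel d T U = Rel d A B" unfolding C_def by blast
  have yt: "y \<in> trip" using one_trip y by simp
  define F where "F = full d (max (depth A) (depth T))"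
  have rA: "reach d A F" unfolding F_def using reach_full A d2 by simp
  have rT: "reach d T F" unfolding F_def using reach_full y d2 by simp
  obtain B2 where B2: "(?x, (F, \<one>\<^bsub>G (nleaves F)\<^esub>, B2)) \<in> Q" using lift[OF rA xt] by blast
  obtain U2 where U2: "(y, (F, \<one>\<^bsub>G (nleaves F)\<^esub>, U2)) \<in> Q" using lift[OF rT] yt y(1) by blast
  have t1: "(F, \<one>\<^bsub>G (nleaves F)\<^esub>, B2) \<in> trip" using Q_trip[OF B2] by simp
  have t2: "(F, \<one>\<^bsub>G (nleaves F)\<^esub>, U2) \<in> trip" using Q_trip[OF U2] by simp
  have "relt ?x = relt (F, \<one>\<^bsub>G (nleaves F)\<^esub>, B2)" using ones_path[OF B2] xt by (simp add: ones_iff)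
  then have r1: "Rel d A B = Rel d F B2" by (simp add: relt_def)
  have "relt y = relt (F, \<one>\<^bsub>G (nleaves F)\<^esub>, U2)" using ones_path[OF U2] yt y(1) by (simp add: ones_iff)
  then have r2: "Rel d T U = Rel d F U2" using y(1) by (simp add: relt_def)
  have "B2 = U2"
    using Rel_inj[OF d2, of F B2 U2] t1 t2 r1 r2 y(5) by (simp add: trip_iff)
  then have "(?x, y) \<in> Q" using B2 U2 Q_sym Q_trans by blast
  then show "y \<in> cls ?x" by (simp add: cls_mem)
qed

definition Rels where
  "Rels = {Rel d A B | A B. dary d A \<and> dary d B \<and> nleaves A = nleaves B}"

lemma Fd_eq: "Fd d G \<rho> \<kappa> = C ` Rels"
  unfolding Fd_def Rels_def using cls_one by blast

lemma inv_one_G: "n \<ge> 1 \<Longrightarrow> inv\<^bsub>G n\<^esub> \<one>\<^bsub>G n\<^esub> = \<one>\<^bsub>G n\<^esub>"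
  by (rule monoid.inv_one[OF group.is_monoid[OF grp]])

lemma mult_one_G: "n \<ge> 1 \<Longrightarrow> \<one>\<^bsub>G n\<^esub> \<otimes>\<^bsub>G n\<^esub> \<one>\<^bsub>G n\<^esub> = \<one>\<^bsub>G n\<^esub>"
  by (rule monoid.l_one[OF group.is_monoid[OF grp] one_carrier])

lemma C_ne: "r \<in> Rels \<Longrightarrow> \<exists>A B. (A, \<one>\<^bsub>G (nleaves A)\<^esub>, B) \<in> C r"
  unfolding Rels_def C_def by blast

lemma inv_C:
  assumes "r \<in> Rels"
  shows "Td_inv d G \<rho> \<kappa> (C r) = C (r\<inverse>) \<and> r\<inverse> \<in> Rels"
proof
  have "{cls (U, inv\<^bsub>G (nleaves T)\<^esub> g, T) | T g U. (T, g, U) \<in> C r} = {C (r\<inverse>)}"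
  proof (intro equalityI subsetI)
    fix X assume "X \<in> {cls (U, inv\<^bsub>G (nleaves T)\<^esub> g, T) | T g U. (T, g, U) \<in> C r}"
    then obtain T g U where X: "X = cls (U, inv\<^bsub>G (nleaves T)\<^esub> g, T)" "(T, g, U) \<in> C r" by blast
    then have m: "dary d T" "dary d U" "nleaves T = nleaves U" "Rel d T U = r" "g = \<one>\<^bsub>G (nleaves T)\<^esub>"
      by (auto simp: C_mem)
    have n: "nleaves T \<ge> 1" using nleaves_pos m d2 by simp
    have "X = cls (U, \<one>\<^bsub>G (nleaves U)\<^esub>, T)" using X(1) m(3,5) inv_one_G[OF n] by simp
    also have "\<dots> = C (Rel d U T)" using cls_one[OF m(2) m(1) m(3)[symmetric]] .
    also have "\<dots> = C (r\<inverse>)" using Rel_conv[of d T U] m(4) by simp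
    finally show "X \<in> {C (r\<inverse>)}" by simp
  next
    fix X assume "X \<in> {C (r\<inverse>)}"
    obtain A B where AB: "(A, \<one>\<^bsub>G (nleaves A)\<^esub>, B) \<in> C r" using C_ne assms by blast
    then have m: "dary d A" "dary d B" "nleaves A = nleaves B" "Rel d A B = r" by (auto simp: C_mem)
    have n: "nleaves A \<ge> 1" using nleaves_pos m d2 by simp
    have "cls (B, inv\<^bsub>G (nleaves A)\<^esub> \<one>\<^bsub>G (nleaves A)\<^esub>, A) = cls (B, \<one>\<^bsub>G (nleaves B)\<^esub>, A)"
      using inv_one_G[OF n] m(3) by simp
    also have "\<dots> = C (Rel d B A)" using cls_one[OF m(2) m(1) m(3)[symmetric]] .
    also have "\<dots> = C (r\<inverse>)" using Rel_conv[of d A B] m(4) by simp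
    finally show "X \<in> {cls (U, inv\<^bsub>G (nleaves T)\<^esub> g, T) | T g U. (T, g, U) \<in> C r}"
      using AB \<open>X \<in> {C (r\<inverse>)}\<close> by blast
  qed
  then show "Td_inv d G \<rho> \<kappa> (C r) = C (r\<inverse>)" unfolding Td_inv_def by simp
  obtain A B where AB: "dary d A" "dary d B" "nleaves A = nleaves B" "r = Rel d A B"
    using assms unfolding Rels_def by blast
  then have "r\<inverse> = Rel d B A" using Rel_conv by simp
  then show "r\<inverse> \<in> Rels" unfolding Rels_def using AB(1,2) AB(3)[symmetric] by blast
qed

lemma mult_C:
  assumes "r1 \<in> Rels" "r2 \<in> Rels"
  shows "Td_mult d G \<rho> \<kappa> (C r1) (C r2) = C (r1 O r2) \<and> r1 O r2 \<in> Rels"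
proof -
  obtain A B where AB: "dary d A" "dary d B" "nleaves A = nleaves B" "r1 = Rel d A B"
    using assms(1) unfolding Rels_def by blast
  obtain A' B' where AB': "dary d A'" "dary d B'" "nleaves A' = nleaves B'" "r2 = Rel d A' B'"
    using assms(2) unfolding Rels_def by blast
  define F where "F = full d (max (depth B) (depth A'))"
  have rB: "reach d B F" unfolding F_def using reach_full AB d2 by simp
  have rA': "reach d A' F" unfolding F_def using reach_full AB' d2 by simp
  have t1: "(B, \<one>\<^bsub>G (nleaves B)\<^esub>, A) \<in> trip" using one_trip[OF AB(2) AB(1) AB(3)[symmetric]] .
  have t2: "(A', \<one>\<^bsub>G (nleaves A')\<^esub>, B') \<in> trip" using one_trip[OF AB'(1) AB'(2) AB'(3)] .
  obtain A2 where A2: "((B, \<one>\<^bsub>G (nleaves B)\<^esub>, A), (F, \<one>\<^bsub>G (nleaves F)\<^esub>, A2)) \<in> Q" using lift[OF rB t1] by blast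
  obtain B2 where B2: "((A', \<one>\<^bsub>G (nleaves A')\<^esub>, B'), (F, \<one>\<^bsub>G (nleaves F)\<^esub>, B2)) \<in> Q" using lift[OF rA' t2] by blast
  have tA2: "(F, \<one>\<^bsub>G (nleaves F)\<^esub>, A2) \<in> trip" using Q_trip[OF A2] by simp
  have tB2: "(F, \<one>\<^bsub>G (nleaves F)\<^esub>, B2) \<in> trip" using Q_trip[OF B2] by simp
  have "relt (B, \<one>\<^bsub>G (nleaves B)\<^esub>, A) = relt (F, \<one>\<^bsub>G (nleaves F)\<^esub>, A2)" using ones_path[OF A2] t1 by (simp add: ones_iff)
  then have e1: "Rel d B A = Rel d F A2" by (simp add: relt_def)
  have "relt (A', \<one>\<^bsub>G (nleaves A')\<^esub>, B') = relt (F, \<one>\<^bsub>G (nleaves F)\<^esub>, B2)" using ones_path[OF B2] t2 by (simp add: ones_iff)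
  then have e2: "Rel d A' B' = Rel d F B2" by (simp add: relt_def)
  have dA2: "dary d A2" "dary d F" "nleaves F = nleaves A2" using tA2 by (auto simp: trip_iff)
  have dB2: "dary d B2" "nleaves F = nleaves B2" using tB2 by (auto simp: trip_iff)
  have "Rel d A2 F = (Rel d F A2)\<inverse>" using Rel_conv[of d F A2] by simp
  also have "\<dots> = (Rel d B A)\<inverse>" using e1 by simp
  also have "\<dots> = Rel d A B" using Rel_conv[of d B A] by simp
  finally have R1: "Rel d A2 F = r1" using AB(4) by simp
  have R2: "Rel d F B2 = r2" using e2 AB'(4) by simp
  have m1: "(A2, \<one>\<^bsub>G (nleaves A2)\<^esub>, F) \<in> C r1" using dA2 R1 by (simp add: C_mem)
  have m2: "(F, \<one>\<^bsub>G (nleaves F)\<^esub>, B2) \<in> C r2" using dB2 dA2 R2 by (simp add: C_mem)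
  have comp: "r1 O r2 = Rel d A2 B2" using Rel_comp[of A2 F B2 d] R1 R2 dA2 dB2 by simp
  have S: "{cls (T, g \<otimes>\<^bsub>G (nleaves T)\<^esub> h, W) | T g U h W. (T, g, U) \<in> C r1 \<and> (U, h, W) \<in> C r2} = {C (r1 O r2)}"
  proof (intro equalityI subsetI)
    fix X assume "X \<in> {cls (T, g \<otimes>\<^bsub>G (nleaves T)\<^esub> h, W) | T g U h W. (T, g, U) \<in> C r1 \<and> (U, h, W) \<in> C r2}"
    then obtain T g U h W where X: "X = cls (T, g \<otimes>\<^bsub>G (nleaves T)\<^esub> h, W)" "(T, g, U) \<in> C r1" "(U, h, W) \<in> C r2"
      by blast
    then have m: "dary d T" "dary d U" "nleaves T = nleaves U" "Rel d T U = r1" "g = \<one>\<^bsub>G (nleaves T)\<^esub>"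
      "dary d W" "nleaves U = nleaves W" "Rel d U W = r2" "h = \<one>\<^bsub>G (nleaves U)\<^esub>"
      by (auto simp: C_mem)
    have n: "nleaves T \<ge> 1" using nleaves_pos m d2 by simp
    have "X = cls (T, \<one>\<^bsub>G (nleaves T)\<^esub>, W)" using X(1) m(3,5,9) mult_one_G[OF n] by simp
    also have "\<dots> = C (Rel d T W)" using cls_one[OF m(1) m(6) trans[OF m(3) m(7)]] .
    also have "\<dots> = C (r1 O r2)" using Rel_comp[of T U W d] m by simp
    finally show "X \<in> {C (r1 O r2)}" by simp
  next
    fix X assume X: "X \<in> {C (r1 O r2)}"
    have n: "nleaves A2 \<ge> 1" using nleaves_pos dA2 d2 by simp
    have "cls (A2, \<one>\<^bsub>G (nleaves A2)\<^esub> \<otimes>\<^bsub>G (nleaves A2)\<^esub> \<one>\<^bsub>G (nleaves F)\<^esub>, B2) = cls (A2, \<one>\<^bsub>G (nleaves A2)\<^esub>, B2)"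
      using mult_one_G[OF n] dA2(3) by simp
    also have "\<dots> = C (Rel d A2 B2)" using cls_one[OF dA2(1) dB2(1) trans[OF dA2(3)[symmetric] dB2(2)]] .
    also have "\<dots> = C (r1 O r2)" using comp by simp
    finally show "X \<in> {cls (T, g \<otimes>\<^bsub>G (nleaves T)\<^esub> h, W) | T g U h W. (T, g, U) \<in> C r1 \<and> (U, h, W) \<in> C r2}"
      using m1 m2 X by blast
  qed
  have "Td_mult d G \<rho> \<kappa> (C r1) (C r2) = C (r1 O r2)" unfolding Td_mult_def S by simp
  moreover have "r1 O r2 \<in> Rels" unfolding comp Rels_def using dA2(1) dB2(1) trans[OF dA2(3)[symmetric] dB2(2)] by blast
  ultimately show ?thesis by blast
qed

end

lemma Id_on_O_sub: "R \<subseteq> S \<times> S \<Longrightarrow> Id_on S O (R O Id_on S) = R"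
  by auto

context CS begin

lemma part1:
  assumes "x \<in> Fd d G \<rho> \<kappa>"
  shows "x \<in> Td_normalizer d G \<rho> \<kappa> (Fd d G \<rho> \<kappa>)"
proof -
  obtain r where r: "r \<in> Rels" "x = C r" using assms Fd_eq by auto
  obtain A B where AB: "dary d A" "dary d B" "nleaves A = nleaves B" "r = Rel d A B"
    using r(1) unfolding Rels_def by blast
  have xc: "x \<in> Td_carrier d G \<rho> \<kappa>"
  proof -
    have "x = cls (A, \<one>\<^bsub>G (nleaves A)\<^esub>, B)" using cls_one[OF AB(1-3)] r(2) AB(4) by simp
    moreover have "(A, \<one>\<^bsub>G (nleaves A)\<^esub>, B) \<in> trip" using one_trip[OF AB(1-3)] .
    ultimately show ?thesis unfolding Td_carrier_def by blast
  qed
  have ri: "Td_inv d G \<rho> \<kappa> x = C (r\<inverse>)" "r\<inverse> \<in> Rels" using inv_C[OF r(1)] r(2) by auto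
  have key: "Td_mult d G \<rho> \<kappa> (Td_inv d G \<rho> \<kappa> x) (Td_mult d G \<rho> \<kappa> (C s) x) = C (r\<inverse> O (s O r))
      \<and> r\<inverse> O (s O r) \<in> Rels" if s: "s \<in> Rels" for s
  proof -
    have 1: "Td_mult d G \<rho> \<kappa> (C s) x = C (s O r)" "s O r \<in> Rels" using mult_C[OF s r(1)] r(2) by auto
    show ?thesis using mult_C[OF ri(2) 1(2)] unfolding ri(1) 1(1) by simp
  qed
  have II: "r\<inverse> O r = Id_on (seqs d)"
  proof -
    have "r\<inverse> O r = Rel d B A O Rel d A B" using Rel_conv[of d A B] AB(4) by simp
    also have "\<dots> = Rel d B B" using Rel_comp[of B A B d] AB(3) by simp
    also have "\<dots> = Id_on (seqs d)" using Rel_diag[OF AB(2)] .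
    finally show ?thesis .
  qed
  have "{Td_mult d G \<rho> \<kappa> (Td_inv d G \<rho> \<kappa> x) (Td_mult d G \<rho> \<kappa> f x) | f. f \<in> Fd d G \<rho> \<kappa>} = Fd d G \<rho> \<kappa>"
  proof (intro equalityI subsetI)
    fix y assume "y \<in> {Td_mult d G \<rho> \<kappa> (Td_inv d G \<rho> \<kappa> x) (Td_mult d G \<rho> \<kappa> f x) | f. f \<in> Fd d G \<rho> \<kappa>}"
    then obtain s where s: "s \<in> Rels" "y = Td_mult d G \<rho> \<kappa> (Td_inv d G \<rho> \<kappa> x) (Td_mult d G \<rho> \<kappa> (C s) x)"
      unfolding Fd_eq by blast
    then have "y = C (r\<inverse> O (s O r))" "r\<inverse> O (s O r) \<in> Rels" using key by auto
    then show "y \<in> Fd d G \<rho> \<kappa>" unfolding Fd_eq by blast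
  next
    fix y assume "y \<in> Fd d G \<rho> \<kappa>"
    then obtain s' where s': "s' \<in> Rels" "y = C s'" unfolding Fd_eq by blast
    have rs: "r O s' \<in> Rels" using mult_C[OF r(1) s'(1)] by simp
    have s0: "(r O s') O r\<inverse> \<in> Rels" using mult_C[OF rs ri(2)] by simp
    obtain A' B' where AB': "dary d A'" "dary d B'" "s' = Rel d A' B'"
      using s'(1) unfolding Rels_def by blast
    have sub: "s' \<subseteq> seqs d \<times> seqs d" using Rel_sub[OF AB'(1,2)] AB'(3) by simp
    have "r\<inverse> O (((r O s') O r\<inverse>) O r) = (r\<inverse> O r) O (s' O (r\<inverse> O r))" by (simp add: O_assoc)
    also have "\<dots> = s'" unfolding II using Id_on_O_sub[OF sub] .
    finally have eq: "r\<inverse> O (((r O s') O r\<inverse>) O r) = s'" .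
    have "Td_mult d G \<rho> \<kappa> (Td_inv d G \<rho> \<kappa> x) (Td_mult d G \<rho> \<kappa> (C ((r O s') O r\<inverse>)) x) = y"
      using key[OF s0] eq s'(2) by simp
    moreover have "C ((r O s') O r\<inverse>) \<in> Fd d G \<rho> \<kappa>" using s0 unfolding Fd_eq by blast
    ultimately show "y \<in> {Td_mult d G \<rho> \<kappa> (Td_inv d G \<rho> \<kappa> x) (Td_mult d G \<rho> \<kappa> f x) | f. f \<in> Fd d G \<rho> \<kappa>}"
      by blast
  qed
  then show ?thesis using xc unfolding Td_normalizer_def by blast
qed

lemma big_rep: "x0 \<in> trip \<Longrightarrow> \<exists>y. (x0, y) \<in> Q \<and> m \<le> nleaves (fst y)"
proof (induction m)
  case 0 then show ?case using Q_refl by blast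
next
  case (Suc m)
  then obtain y where y: "(x0, y) \<in> Q" "m \<le> nleaves (fst y)" by blast
  have yt: "y \<in> trip" using Q_trip[OF y(1)] by simp
  obtain T g U where yy: "y = (T, g, U)" by (cases y) auto
  have tt: "(T, g, U) \<in> trip" using yt yy by simp
  have n: "1 \<le> nleaves T" using trip_pos[OF tt] .
  have g: "g \<in> carrier (G (nleaves T))" using tt unfolding trip_iff by blast
  have e: "((T, g, U), (caret d (\<rho> (nleaves T) g 1) T, \<kappa> (nleaves T) 1 g, caret d 1 U)) \<in> E"
    using exp_intro[OF tt _ n] by simp
  have r: "\<rho> (nleaves T) g 1 \<in> {1..nleaves T}" using rho_range[OF n g] n by simp
  have "nleaves (caret d (\<rho> (nleaves T) g 1) T) = nleaves T + d - 1"
    using nleaves_caret(1)[of "\<rho> (nleaves T) g 1" T d] r d2 by simp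
  then have "Suc m \<le> nleaves (fst (caret d (\<rho> (nleaves T) g 1) T, \<kappa> (nleaves T) 1 g, caret d 1 U))"
    using y(2) yy d2 by simp
  moreover have "(x0, (caret d (\<rho> (nleaves T) g 1) T, \<kappa> (nleaves T) 1 g, caret d 1 U)) \<in> Q"
    using Q_trans[OF y(1)] E_Q[OF e] yy by simp
  ultimately show ?case by blast
qed

end

context CS begin

lemma Td_mult_memI: "(T, g, U) \<in> X \<Longrightarrow> (U, h, W) \<in> Y \<Longrightarrow> z \<in> cls (T, g \<otimes>\<^bsub>G (nleaves T)\<^esub> h, W)
   \<Longrightarrow> z \<in> Td_mult d G \<rho> \<kappa> X Y"
  unfolding Td_mult_def by blast

lemma Td_inv_memI: "(T, g, U) \<in> X \<Longrightarrow> z \<in> cls (U, inv\<^bsub>G (nleaves T)\<^esub> g, T) \<Longrightarrow> z \<in> Td_inv d G \<rho> \<kappa> X"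
  unfolding Td_inv_def by blast

lemma part2:
  assumes div: "diverse d G \<kappa>" and xN: "x \<in> Td_normalizer d G \<rho> \<kappa> (Fd d G \<rho> \<kappa>)"
  shows "x \<in> Fd d G \<rho> \<kappa>"
proof -
  have xc: "x \<in> Td_carrier d G \<rho> \<kappa>" using xN unfolding Td_normalizer_def by blast
  have conj: "Td_mult d G \<rho> \<kappa> (Td_inv d G \<rho> \<kappa> x) (Td_mult d G \<rho> \<kappa> f x) \<in> Fd d G \<rho> \<kappa>"
    if "f \<in> Fd d G \<rho> \<kappa>" for f
  proof -
    have "{Td_mult d G \<rho> \<kappa> (Td_inv d G \<rho> \<kappa> x) (Td_mult d G \<rho> \<kappa> f x) | f. f \<in> Fd d G \<rho> \<kappa>} = Fd d G \<rho> \<kappa>"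
      using xN unfolding Td_normalizer_def by blast
    then show ?thesis using that by blast
  qed
  obtain n0 where n0: "\<forall>n\<ge>n0. n \<ge> 1 \<longrightarrow> (\<Inter>k\<in>{1..n}. \<kappa> n k ` carrier (G n)) = {\<one>\<^bsub>G (n + d - 1)\<^esub>}"
    using div unfolding diverse_def by blast
  obtain x0 where x0: "x0 \<in> trip" "x = cls x0" using xc unfolding Td_carrier_def by blast
  obtain y where y: "(x0, y) \<in> Q" "max n0 1 \<le> nleaves (fst y)" using big_rep[OF x0(1)] by blast
  obtain T g U where yy: "y = (T, g, U)" by (cases y) auto
  have tt: "(T, g, U) \<in> trip" using Q_trip[OF y(1)] yy by simp
  have xcl: "x = cls (T, g, U)" using cls_eq[OF y(1)] x0(2) yy by simp
  obtain n where nT: "nleaves T = n" by blast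
  have n: "n \<ge> 1" "n \<ge> n0" using y(2) yy nT by auto
  have tf: "dary d T" "dary d U" "nleaves U = n" "g \<in> carrier (G n)" using tt nT unfolding trip_iff by auto
  have gn: "group (G n)" using grp[OF n(1)] .
  have gm: "group (G (n + d - 1))" using grp[of "n + d - 1"] n d2 by simp
  define c where "c = \<rho> n g 1"
  have c: "c \<in> {1..n}" unfolding c_def using rho_range[OF n(1) tf(4)] n by simp
  have inT: "(T, g, U) \<in> x" using xcl cls_self[OF tt] by simp
  have e1: "((T, g, U), (caret d c T, \<kappa> n 1 g, caret d 1 U)) \<in> E"
    using exp_intro[OF tt, of 1] n nT unfolding c_def by simp
  have X1: "(caret d c T, \<kappa> n 1 g, caret d 1 U) \<in> x"
    using xcl E_Q[OF e1] cls_mem by simp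
  have k1g: "\<kappa> n 1 g \<in> carrier (G (n + d - 1))" using kappa_carrier[OF n(1) _ _ tf(4)] n by simp
  have nl: "nleaves (caret d k V) = n + d - 1" if "k \<in> {1..n}" "nleaves V = n" for k V
    using nleaves_caret(1)[of k V d] that d2 by simp
  have ig: "inv\<^bsub>G n\<^esub> g \<in> carrier (G n)" using group.inv_closed[OF gn tf(4)] .
  have all: "\<kappa> n a (inv\<^bsub>G n\<^esub> g) = inv\<^bsub>G (n + d - 1)\<^esub> (\<kappa> n 1 g)" if a: "a \<in> {1..n}" for a
  proof -
    have yi: "(U, inv\<^bsub>G n\<^esub> g, T) \<in> trip" using tf ig nT unfolding trip_iff by simp
    have e2: "((U, inv\<^bsub>G n\<^esub> g, T), (caret d (\<rho> n (inv\<^bsub>G n\<^esub> g) a) U, \<kappa> n a (inv\<^bsub>G n\<^esub> g), caret d a T)) \<in> E"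
      using exp_intro[OF yi, of a] a tf(3) by simp
    define p where "p = (caret d (\<rho> n (inv\<^bsub>G n\<^esub> g) a) U, \<kappa> n a (inv\<^bsub>G n\<^esub> g), caret d a T)"
    have "p \<in> cls (U, inv\<^bsub>G (nleaves T)\<^esub> g, T)" using E_Q[OF e2] nT unfolding p_def cls_mem by simp
    then have pI: "p \<in> Td_inv d G \<rho> \<kappa> x" using Td_inv_memI[OF inT] by blast
    have ra: "\<rho> n (inv\<^bsub>G n\<^esub> g) a \<in> {1..n}" using rho_range[OF n(1) ig a] .
    have nca: "nleaves (caret d a T) = n + d - 1" using nl[OF a nT] .
    have ncc: "nleaves (caret d c T) = n + d - 1" using nl[OF c nT] .
    have nc1: "nleaves (caret d 1 U) = n + d - 1" using nl[of 1 U] n tf(3) by simp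
    have ncr: "nleaves (caret d (\<rho> n (inv\<^bsub>G n\<^esub> g) a) U) = n + d - 1" using nl[OF ra tf(3)] .
    have dc: "dary d (caret d a T)" "dary d (caret d c T)" "dary d (caret d 1 U)"
      "dary d (caret d (\<rho> n (inv\<^bsub>G n\<^esub> g) a) U)" using dary_caret(1) tf by auto
    define f where "f = cls (caret d a T, \<one>\<^bsub>G (nleaves (caret d a T))\<^esub>, caret d c T)"
    have fF: "f \<in> Fd d G \<rho> \<kappa>" unfolding f_def Fd_def using dc(1,2) trans[OF nca ncc[symmetric]] by blast
    have qt: "(caret d a T, \<one>\<^bsub>G (n + d - 1)\<^esub>, caret d c T) \<in> trip"
      using one_trip[OF dc(1) dc(2)] nca ncc by simp
    have qf: "(caret d a T, \<one>\<^bsub>G (n + d - 1)\<^esub>, caret d c T) \<in> f"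
      unfolding f_def using cls_self[OF qt] nca by simp
    define r2 where "r2 = (caret d a T, \<one>\<^bsub>G (n + d - 1)\<^esub> \<otimes>\<^bsub>G (n + d - 1)\<^esub> \<kappa> n 1 g, caret d 1 U)"
    have om: "\<one>\<^bsub>G (n + d - 1)\<^esub> \<otimes>\<^bsub>G (n + d - 1)\<^esub> \<kappa> n 1 g = \<kappa> n 1 g"
      using monoid.l_one[OF group.is_monoid[OF gm] k1g] .
    have r2t: "r2 \<in> trip" unfolding r2_def om using dc nca nc1 k1g unfolding trip_iff by simp
    have "r2 \<in> cls (caret d a T, \<one>\<^bsub>G (n + d - 1)\<^esub> \<otimes>\<^bsub>G (nleaves (caret d a T))\<^esub> \<kappa> n 1 g, caret d 1 U)"
      using cls_self[OF r2t] unfolding r2_def nca .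
    then have r2M: "r2 \<in> Td_mult d G \<rho> \<kappa> f x" using Td_mult_memI[OF qf X1] by blast
    define z where "z = (caret d (\<rho> n (inv\<^bsub>G n\<^esub> g) a) U, \<kappa> n a (inv\<^bsub>G n\<^esub> g) \<otimes>\<^bsub>G (n + d - 1)\<^esub> (\<one>\<^bsub>G (n + d - 1)\<^esub> \<otimes>\<^bsub>G (n + d - 1)\<^esub> \<kappa> n 1 g), caret d 1 U)"
    have kag: "\<kappa> n a (inv\<^bsub>G n\<^esub> g) \<in> carrier (G (n + d - 1))" using kappa_carrier[OF n(1) _ _ ig] a by simp
    have prodc: "\<kappa> n a (inv\<^bsub>G n\<^esub> g) \<otimes>\<^bsub>G (n + d - 1)\<^esub> \<kappa> n 1 g \<in> carrier (G (n + d - 1))"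
      using monoid.m_closed[OF group.is_monoid[OF gm] kag k1g] .
    have zt: "z \<in> trip" unfolding z_def om using dc ncr nc1 prodc unfolding trip_iff by simp
    have "z \<in> cls (caret d (\<rho> n (inv\<^bsub>G n\<^esub> g) a) U, \<kappa> n a (inv\<^bsub>G n\<^esub> g) \<otimes>\<^bsub>G (nleaves (caret d (\<rho> n (inv\<^bsub>G n\<^esub> g) a) U))\<^esub> (\<one>\<^bsub>G (n + d - 1)\<^esub> \<otimes>\<^bsub>G (n + d - 1)\<^esub> \<kappa> n 1 g), caret d 1 U)"
      using cls_self[OF zt] unfolding z_def ncr .
    then have zP: "z \<in> Td_mult d G \<rho> \<kappa> (Td_inv d G \<rho> \<kappa> x) (Td_mult d G \<rho> \<kappa> f x)"
      using Td_mult_memI[OF pI[unfolded p_def] r2M[unfolded r2_def]] by blast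
    have "Td_mult d G \<rho> \<kappa> (Td_inv d G \<rho> \<kappa> x) (Td_mult d G \<rho> \<kappa> f x) \<in> Fd d G \<rho> \<kappa>" using conj[OF fF] .
    then obtain A B where AB: "Td_mult d G \<rho> \<kappa> (Td_inv d G \<rho> \<kappa> x) (Td_mult d G \<rho> \<kappa> f x) = cls (A, \<one>\<^bsub>G (nleaves A)\<^esub>, B)"
      "dary d A" "dary d B" "nleaves A = nleaves B" unfolding Fd_def by blast
    have q: "((A, \<one>\<^bsub>G (nleaves A)\<^esub>, B), z) \<in> Q" using zP AB(1) cls_mem by simp
    have "(A, \<one>\<^bsub>G (nleaves A)\<^esub>, B) \<in> ones" using one_trip[OF AB(2-4)] by (simp add: ones_iff)
    then have "z \<in> ones" using ones_path[OF q] by simp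
    then have "\<kappa> n a (inv\<^bsub>G n\<^esub> g) \<otimes>\<^bsub>G (n + d - 1)\<^esub> \<kappa> n 1 g = \<one>\<^bsub>G (n + d - 1)\<^esub>"
      unfolding z_def om ones_iff using ncr by simp
    then show ?thesis using group.inv_equality[OF gm _ k1g kag] by simp
  qed
  have mem: "inv\<^bsub>G (n + d - 1)\<^esub> (\<kappa> n 1 g) \<in> (\<Inter>k\<in>{1..n}. \<kappa> n k ` carrier (G n))"
  proof
    fix a assume a: "a \<in> {1..n}"
    show "inv\<^bsub>G (n + d - 1)\<^esub> (\<kappa> n 1 g) \<in> \<kappa> n a ` carrier (G n)"
      using all[OF a] ig by (metis image_eqI)
  qed
  have eqI: "(\<Inter>k\<in>{1..n}. \<kappa> n k ` carrier (G n)) = {\<one>\<^bsub>G (n + d - 1)\<^esub>}"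
    using n0[rule_format, OF n(2) n(1)] .
  have "inv\<^bsub>G (n + d - 1)\<^esub> (\<kappa> n 1 g) = \<one>\<^bsub>G (n + d - 1)\<^esub>" using mem unfolding eqI by simp
  then have "\<kappa> n 1 g = \<one>\<^bsub>G (n + d - 1)\<^esub>" using group.inv_eq_1_iff[OF gm k1g] by simp
  then have "\<kappa> n 1 g = \<kappa> n 1 \<one>\<^bsub>G n\<^esub>" using kappa_one[OF n(1)] n by simp
  then have g1: "g = \<one>\<^bsub>G n\<^esub>" by (rule inj_onD[OF kappa_inj[OF n(1) le_refl n(1)] _ tf(4) one_carrier[OF n(1)]])
  have "x = cls (T, \<one>\<^bsub>G (nleaves T)\<^esub>, U)" using xcl g1 nT by simp
  moreover have "nleaves T = nleaves U" using tf(3) nT by simp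
  ultimately show ?thesis unfolding Fd_def using tf(1,2) by blast
qed

end

theorem mainTheorem3:
  fixes d :: nat and G :: "nat \<Rightarrow> 'g monoid" and \<rho> :: "nat \<Rightarrow> 'g \<Rightarrow> nat \<Rightarrow> nat"
    and \<kappa> :: "nat \<Rightarrow> nat \<Rightarrow> 'g \<Rightarrow> 'g"
  assumes "d \<ge> 2"
    and "cloning_system d G \<rho> \<kappa>"
    and "diverse d G \<kappa>"
  shows "Td_normalizer d G \<rho> \<kappa> (Fd d G \<rho> \<kappa>) = Fd d G \<rho> \<kappa>"
proof -
  interpret CS d G \<rho> \<kappa> using assms(1,2) by unfold_locales
  show ?thesis using part1 part2[OF assms(3)] by blast
qed

end
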